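(* Let $I=(I_1,\dots,I_d)\in\mathcal I_d$. If $I_j=I_k$ for some $j<k$, then $\omega_I=0$; if $I_j=\overline{I_k}$ for some $j\leq k$, then $\omega_I=0$.
   Context: $U_-$ is the universal enveloping algebra of the Lie superalgebra $L_-=L_{-2}\oplus L_{-1}$, where $L_{-2}$ has basis $\partial_1,\dots,\partial_5$ (even, central in $L_-$), $L_{-1}$ is spanned by odd elements $d_{ij}=-d_{ji}$ ($i,j\in[5]$, $d_{ii}=0$) with $[d_{ij},d_{kl}]=\varepsilon_{ijkl}\partial_{t_{ijkl}}$; if $|\{i,j,k,l\}|=4$, $t_{ijkl}$ is the fifth element of $[5]$ and $\varepsilon_{ijkl}$ the sign of the permutation $(i,j,k,l,t_{ijkl})$, otherwise $\varepsilon_{ijkl}=0$. $\mathcal I_d$ is the set of $d$-tuples of ordered pairs $I_l=(i_l,j_l)\in[5]^2$, $\overline{(i,j)}=(j,i)$, $d_I=d_{i_1j_1}\cdots d_{i_dj_d}$. For $k\neq l$ in $[d]$, $D_{\{k,l\}}(I)=\tfrac12(-1)^{k+l}\varepsilon_{i_kj_ki_lj_l}\partial_{t_{i_kj_ki_lj_l}}$. $\mathrm{SIF}_d$ is the set of sets $S$ of pairwise disjoint 2-element subsets of $[d]$; two disjoint pairs $\{k,l\},\{h,m\}$ cross if exactly one of $k,l$ is strictly between $h$ and $m$; $c(S)$ is the number of crossing pairs in $S$. $D_S(I)=\prod_{P\in S}D_P(I)$ ($D_\emptyset=1$), $C_S(I)$ is $I$ with all $I_j$, $j\in\bigcup S$,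 deleted, and $\omega_I=\sum_{S\in \mathrm{SIF}_d}(-1)^{c(S)}D_S(I)\,d_{C_S(I)}$. *)

theory Defs
  imports Main "HOL.Real_Vector_Spaces"
begin

text \<open>Positions in an index tuple I are 0-based
  (position k of the list corresponds to I_(k+1) of the paper); all signs
  used below depend only on parities/relative order, so this shift is harmless.\<close>

definition inv_count :: "nat list \<Rightarrow> nat" where
  "inv_count xs = card {(a, b). a < b \<and> b < length xs \<and> xs ! a > xs ! b}"

definition perm_sign :: "nat list \<Rightarrow> int" where
  "perm_sign xs = (-1) ^ inv_count xs"

definition tt :: "nat \<Rightarrow> nat \<Rightarrow> nat \<Rightarrow> nat \<Rightarrow> nat" where
  "tt i j k l = (THE t. t \<in> {1..5} - {i, j, k, l})"

definition eps :: "nat \<Rightarrow> nat \<Rightarrow> nat \<Rightarrow> nat \<Rightarrow> int" where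
  "eps i j k l =
     (if {i, j, k, l} \<subseteq> {1..5} \<and> card {i, j, k, l} = 4
      then perm_sign [i, j, k, l, tt i j k l] else 0)"

text \<open>Defining relations of U_-: the family (del, dd) of elements of an associative
  real algebra satisfies the relations of the generators of U(L_-).
  Since U_- is universal for these relations, an identity among the generators holds in
  U_- iff it holds for every such family in every such algebra.\<close>
definition Uminus_rels :: "(nat \<Rightarrow> 'a::real_algebra_1) \<Rightarrow> (nat \<Rightarrow> nat \<Rightarrow> 'a) \<Rightarrow> bool" where
  "Uminus_rels del dd \<longleftrightarrow>
     (\<forall>i\<in>{1..5}. \<forall>j\<in>{1..5}. del i * del j = del j * del i) \<and>
     (\<forall>i\<in>{1..5}. \<forall>k\<in>{1..5}. \<forall>l\<in>{1..5}. del i * dd k l = dd k l * del i) \<and>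
     (\<forall>i\<in>{1..5}. \<forall>j\<in>{1..5}. dd i j = - dd j i) \<and>
     (\<forall>i\<in>{1..5}. \<forall>j\<in>{1..5}. \<forall>k\<in>{1..5}. \<forall>l\<in>{1..5}.
        dd i j * dd k l + dd k l * dd i j = of_int (eps i j k l) * del (tt i j k l))"

type_synonym idx = "(nat \<times> nat) list"

definition valid_idx :: "idx \<Rightarrow> bool" where
  "valid_idx I \<longleftrightarrow> (\<forall>p\<in>set I. fst p \<in> {1..5} \<and> snd p \<in> {1..5})"

definition dmon :: "(nat \<Rightarrow> nat \<Rightarrow> 'a::real_algebra_1) \<Rightarrow> idx \<Rightarrow> 'a" where
  "dmon dd I = prod_list (map (\<lambda>(i, j). dd i j) I)"

definition Dkl :: "(nat \<Rightarrow> 'a::real_algebra_1) \<Rightarrow> idx \<Rightarrow> nat \<Rightarrow> nat \<Rightarrow> 'a" where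
  "Dkl del I k l =
     (let (a, b) = I ! k; (c, e) = I ! l in
      scaleR (1/2) (of_int ((-1) ^ (k + l) * eps a b c e) * del (tt a b c e)))"

definition sif :: "nat \<Rightarrow> nat set set set" where
  "sif d = {S. (\<forall>P\<in>S. P \<subseteq> {0..<d} \<and> card P = 2) \<and>
               (\<forall>P\<in>S. \<forall>Q\<in>S. P \<noteq> Q \<longrightarrow> P \<inter> Q = {})}"

definition crosses :: "nat set \<Rightarrow> nat set \<Rightarrow> bool" where
  "crosses P Q \<longleftrightarrow> card {x\<in>P. Min Q < x \<and> x < Max Q} = 1"

definition ncross :: "nat set set \<Rightarrow> nat" where
  "ncross S = card {{P, Q} | P Q. P \<in> S \<and> Q \<in> S \<and> P \<noteq> Q \<and> crosses P Q}"

text \<open>D_S(I) = product of D_P(I), P in S (these commute; taken in order of min P).\<close>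
definition DS :: "(nat \<Rightarrow> 'a::real_algebra_1) \<Rightarrow> idx \<Rightarrow> nat set set \<Rightarrow> 'a" where
  "DS del I S = prod_list (map (\<lambda>k. prod_list (map (\<lambda>l.
       if {k, l} \<in> S \<and> k < l then Dkl del I k l else 1) [0..<length I])) [0..<length I])"

definition CS :: "idx \<Rightarrow> nat set set \<Rightarrow> idx" where
  "CS I S = nths I (- \<Union>S)"

definition omega :: "(nat \<Rightarrow> 'a::real_algebra_1) \<Rightarrow> (nat \<Rightarrow> nat \<Rightarrow> 'a) \<Rightarrow> idx \<Rightarrow> 'a" where
  "omega del dd I = (\<Sum>S\<in>sif (length I).
      of_int ((-1) ^ ncross S) * DS del I S * dmon dd (CS I S))"

end

theory Submission
  imports Defs "HOL-Library.Multiset"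
begin

lemma prod_list_concat_gen: "prod_list (concat xss) = prod_list (map prod_list xss)"
  by (induct xss) auto

lemma prod_list_if1: "prod_list (map (\<lambda>x. if P x then f x else 1) xs) = prod_list (map f (filter P xs))"
  by (induct xs) auto

lemma of_real_comm: "(of_real r :: 'a::real_algebra_1) * y = y * of_real r"
  by (simp add: of_real_def)

lemma prod_list_ofreal:
  "prod_list (map (\<lambda>x. (of_real (c x) :: 'a::real_algebra_1) * g x) xs) =
   of_real (prod_list (map c xs)) * prod_list (map g xs)"
proof (induct xs)
  case (Cons x xs)
  then show ?case by (simp add: of_real_def)
qed auto

lemma comm_prod_list:
  assumes "\<forall>y\<in>set ys. x*y = y*x"
  shows "x * prod_list ys = prod_list ys * (x::'a::monoid_mult)"
  using assms
proof (induct ys)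
  case (Cons y ys)
  have "x * prod_list (y#ys) = (x*y) * prod_list ys" by (simp add: mult.assoc)
  also have "\<dots> = y * (x * prod_list ys)" using Cons by (simp add: mult.assoc)
  also have "\<dots> = y * (prod_list ys * x)" using Cons by simp
  also have "\<dots> = prod_list (y#ys) * x" by (simp add: mult.assoc)
  finally show ?case .
qed auto

lemma prod_list_perm:
  assumes C: "\<forall>x\<in>C. \<forall>y\<in>C. x*y = y*x"
  shows "set xs \<subseteq> C \<Longrightarrow> set ys \<subseteq> C \<Longrightarrow> mset xs = mset ys \<Longrightarrow> prod_list xs = prod_list (ys::'a::monoid_mult list)"
proof (induct xs arbitrary: ys)
  case Nil
  then show ?case by simp
next
  case (Cons x xs)
  have "x \<in># mset ys" using Cons(4) by (metis mset.simps(2) union_single_eq_member)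
  then have "x \<in> set ys" by simp
  then obtain ys1 ys2 where ys: "ys = ys1 @ x # ys2" by (meson split_list)
  have xC: "x \<in> C" using Cons(2) by simp
  have s1: "set ys1 \<subseteq> C" using Cons(3) ys by simp
  have "x * prod_list ys1 = prod_list ys1 * x"
    by (rule comm_prod_list) (use C xC s1 in blast)
  have "prod_list ys = prod_list ys1 * (x * prod_list ys2)" using ys by simp
  also have "\<dots> = (prod_list ys1 * x) * prod_list ys2" by (simp only: mult.assoc)
  also have "\<dots> = (x * prod_list ys1) * prod_list ys2" using \<open>x * prod_list ys1 = prod_list ys1 * x\<close> by simp
  also have "\<dots> = x * prod_list (ys1 @ ys2)" by (simp only: mult.assoc prod_list.append)
  finally have pys: "prod_list ys = x * prod_list (ys1 @ ys2)" .
  have m: "mset xs = mset (ys1 @ ys2)" using Cons(4) ys by simp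
  have "prod_list xs = prod_list (ys1 @ ys2)"
    by (rule Cons(1)) (use Cons(2) Cons(3) ys m in auto)
  then show ?case using pys by simp
qed

definition ep :: "idx \<Rightarrow> nat \<Rightarrow> nat \<Rightarrow> int" where
  "ep I k l = eps (fst (I!k)) (snd (I!k)) (fst (I!l)) (snd (I!l))"
definition ck :: "idx \<Rightarrow> nat \<Rightarrow> nat \<Rightarrow> real" where
  "ck I k l = (1/2) * (-1)^(k+l) * real_of_int (ep I k l)"
definition tk :: "idx \<Rightarrow> nat \<Rightarrow> nat \<Rightarrow> nat" where
  "tk I k l = (if ep I k l \<noteq> 0 then tt (fst (I!k)) (snd (I!k)) (fst (I!l)) (snd (I!l)) else 1)"
definition PS :: "nat \<Rightarrow> nat set set \<Rightarrow> (nat \<times> nat) set" where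
  "PS n S = {(k,l). k<l \<and> l<n \<and> {k,l} \<in> S}"
definition DM :: "(nat \<Rightarrow> 'a::monoid_mult) \<Rightarrow> nat multiset \<Rightarrow> 'a" where
  "DM del M = prod_list (map del (sorted_list_of_multiset M))"

lemma tt_in: assumes "eps a b c e \<noteq> 0" shows "tt a b c e \<in> {1..5}"
proof -
  have s: "{a,b,c,e} \<subseteq> {1..5}" and c4: "card {a,b,c,e} = 4"
    using assms by (auto simp: eps_def split: if_splits)
  have "card ({1..5::nat} - {a,b,c,e}) = card {1..5::nat} - card {a,b,c,e}"
    by (rule card_Diff_subset) (use s in auto)
  then have "card ({1..5::nat} - {a,b,c,e}) = 1" using c4 by simp
  then obtain t where t: "{1..5::nat} - {a,b,c,e} = {t}" by (meson card_1_singletonE)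
  have "tt a b c e = t" unfolding tt_def t by simp
  moreover have "t \<in> {1..5}" using t by (metis Diff_iff insertI1)
  ultimately show ?thesis by simp
qed

lemma tk_in: "tk I k l \<in> {1..5}"
  using tt_in by (auto simp: tk_def ep_def)

lemma Dkl_rep: "Dkl del I k l = of_real (ck I k l) * del (tk I k l)"
proof -
  obtain a b where ab: "I!k = (a,b)" by fastforce
  obtain c e where ce: "I!l = (c,e)" by fastforce
  have r: "(of_real ((- 1) ^ (k + l) * real_of_int z / 2) :: 'a) = of_real (1/2) * ((- 1) ^ (k + l) * of_int z)" for z
  proof -
    have "(- 1) ^ (k + l) * real_of_int z / 2 = (1/2) * ((- 1) ^ (k + l) * real_of_int z)" by simp
    then have "(of_real ((- 1) ^ (k + l) * real_of_int z / 2) :: 'a) = of_real (1/2) * of_real ((- 1) ^ (k + l) * real_of_int z)"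
      by (simp only: of_real_mult)
    also have "(of_real ((- 1) ^ (k + l) * real_of_int z) :: 'a) = (- 1) ^ (k + l) * of_int z"
      by simp
    finally show ?thesis .
  qed
  show ?thesis
    by (simp add: Dkl_def ck_def tk_def ep_def ab ce scaleR_conv_of_real r mult.assoc)
qed

lemma prod_list_product:
  "prod_list (map f (List.product xs ys)) = prod_list (map (\<lambda>x. prod_list (map (\<lambda>y. f (x,y)) ys)) xs)"
  by (induct xs) (auto simp: o_def)

context
  fixes del :: "nat \<Rightarrow> 'a::real_algebra_1"
  assumes DC: "\<forall>i\<in>{1..5}. \<forall>j\<in>{1..5}. del i * del j = del j * del i"
begin

lemma DM_list: "set xs \<subseteq> {1..5} \<Longrightarrow> prod_list (map del xs) = DM del (mset xs)"
  unfolding DM_def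
  by (rule prod_list_perm[where C="del ` {1..5}"]) (use DC in auto)

lemma DM_add: "t \<in> {1..5} \<Longrightarrow> set_mset M \<subseteq> {1..5} \<Longrightarrow> DM del (add_mset t M) = del t * DM del M"
proof -
  assume t: "t \<in> {1..5}" and M: "set_mset M \<subseteq> {1..5}"
  have "DM del (add_mset t M) = DM del (mset (t # sorted_list_of_multiset M))" by simp
  also have "\<dots> = prod_list (map del (t # sorted_list_of_multiset M))"
    by (rule DM_list[symmetric]) (use t M in auto)
  also have "\<dots> = del t * DM del M" by (simp add: DM_def)
  finally show ?thesis .
qed

lemma DS_rep:
  "DS del I S = of_real (\<Prod>p\<in>PS (length I) S. ck I (fst p) (snd p)) *
     DM del (image_mset (\<lambda>p. tk I (fst p) (snd p)) (mset_set (PS (length I) S)))"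
proof -
  define n where "n = length I"
  define xs where "xs = List.product [0..<n] [0..<n]"
  define Q where "Q = (\<lambda>p::nat\<times>nat. {fst p, snd p} \<in> S \<and> fst p < snd p)"
  define ys where "ys = filter Q xs"
  have "DS del I S = prod_list (map (\<lambda>p. if Q p then Dkl del I (fst p) (snd p) else 1) xs)"
    unfolding DS_def xs_def prod_list_product Q_def n_def by (simp only: fst_conv snd_conv)
  also have "\<dots> = prod_list (map (\<lambda>p. Dkl del I (fst p) (snd p)) ys)"
    unfolding ys_def by (rule prod_list_if1)
  also have "\<dots> = prod_list (map (\<lambda>p. of_real (ck I (fst p) (snd p)) * del (tk I (fst p) (snd p))) ys)"
    by (simp add: Dkl_rep)
  also have "\<dots> = of_real (prod_list (map (\<lambda>p. ck I (fst p) (snd p)) ys)) * prod_list (map (\<lambda>p. del (tk I (fst p) (snd p))) ys)"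
    by (rule prod_list_ofreal)
  finally have 1: "DS del I S = \<dots>" .
  have dys: "distinct ys" unfolding ys_def xs_def by (simp add: distinct_product)
  have sys: "set ys = PS n S" unfolding ys_def xs_def Q_def PS_def by auto
  have 2: "prod_list (map (\<lambda>p. ck I (fst p) (snd p)) ys) = (\<Prod>p\<in>PS n S. ck I (fst p) (snd p))"
    using dys sys by (metis prod.distinct_set_conv_list)
  have "prod_list (map (\<lambda>p. del (tk I (fst p) (snd p))) ys) = prod_list (map del (map (\<lambda>p. tk I (fst p) (snd p)) ys))"
    by (simp add: o_def)
  also have "\<dots> = DM del (mset (map (\<lambda>p. tk I (fst p) (snd p)) ys))"
    by (rule DM_list) (use tk_in in auto)
  also have "\<dots> = DM del (image_mset (\<lambda>p. tk I (fst p) (snd p)) (mset_set (PS n S)))"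
  proof -
    have "mset_set (PS n S) = mset ys" using mset_set_set[OF dys] sys by simp
    then show ?thesis by simp
  qed
  finally show ?thesis using 1 2 n_def by simp
qed

end

lemma sif_finite: "finite (sif n)"
proof -
  have "sif n \<subseteq> Pow (Pow {0..<n})" unfolding sif_def by auto
  then show ?thesis by (rule finite_subset) auto
qed

lemma sif_pair: assumes "S \<in> sif n" "P \<in> S" obtains a b where "a < b" "b < n" "P = {a,b}"
proof -
  have c: "card P = 2" and s: "P \<subseteq> {0..<n}" using assms unfolding sif_def by auto
  then obtain x y where xy: "P = {x,y}" "x \<noteq> y" by (auto simp: card_2_iff)
  show ?thesis
  proof (cases "x < y")
    case True then show ?thesis using that[of x y] xy s by auto
  next
    case False then show ?thesis using that[of y x] xy s by (auto simp: insert_commute)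
  qed
qed

lemma sif_disj: "S \<in> sif n \<Longrightarrow> P \<in> S \<Longrightarrow> Q \<in> S \<Longrightarrow> P \<noteq> Q \<Longrightarrow> P \<inter> Q = {}"
  unfolding sif_def by blast

lemma sif_same: "S \<in> sif n \<Longrightarrow> P \<in> S \<Longrightarrow> Q \<in> S \<Longrightarrow> x \<in> P \<Longrightarrow> x \<in> Q \<Longrightarrow> P = Q"
  using sif_disj by blast


lemma PS_finite: "finite (PS n S)"
proof -
  have "PS n S \<subseteq> {0..<n} \<times> {0..<n}" unfolding PS_def by auto
  then show ?thesis by (rule finite_subset) auto
qed

lemma prod_PS_union:
  fixes h :: "nat \<Rightarrow> real"
  assumes S: "S \<in> sif n"
  shows "(\<Prod>p\<in>PS n S. h (fst p) * h (snd p)) = (\<Prod>x\<in>\<Union>S. h x)"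
proof -
  have i1: "inj_on fst (PS n S)"
  proof (rule inj_onI)
    fix p q assume p: "p \<in> PS n S" and q: "q \<in> PS n S" and e: "fst p = fst q"
    have m1: "{fst p, snd p} \<in> S" and m2: "{fst q, snd q} \<in> S" using p q unfolding PS_def by auto
    have "{fst p, snd p} = {fst q, snd q}"
      by (rule sif_same[OF S m1 m2, of "fst p"]) (use e in auto)
    then have "snd p \<in> {fst q, snd q}" by blast
    moreover have "snd p \<noteq> fst q" using p e unfolding PS_def by auto
    ultimately show "p = q" using e by (simp add: prod_eq_iff)
  qed
  have i2: "inj_on snd (PS n S)"
  proof (rule inj_onI)
    fix p q assume p: "p \<in> PS n S" and q: "q \<in> PS n S" and e: "snd p = snd q"
    have m1: "{fst p, snd p} \<in> S" and m2: "{fst q, snd q} \<in> S" using p q unfolding PS_def by auto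
    have "{fst p, snd p} = {fst q, snd q}"
      by (rule sif_same[OF S m1 m2, of "snd p"]) (use e in auto)
    then have "fst p \<in> {fst q, snd q}" by blast
    moreover have "fst p \<noteq> snd q" using p e unfolding PS_def by auto
    ultimately show "p = q" using e by (simp add: prod_eq_iff)
  qed
  have d: "fst ` PS n S \<inter> snd ` PS n S = {}"
  proof (rule ccontr)
    assume "fst ` PS n S \<inter> snd ` PS n S \<noteq> {}"
    then obtain p q where p: "p \<in> PS n S" and q: "q \<in> PS n S" and e: "fst p = snd q" by auto
    have m1: "{fst p, snd p} \<in> S" and m2: "{fst q, snd q} \<in> S" using p q unfolding PS_def by auto
    have "{fst p, snd p} = {fst q, snd q}"
      by (rule sif_same[OF S m1 m2, of "fst p"]) (use e in auto)
    then have "snd p \<in> {fst q, snd q}" by blast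
    moreover have "fst q < snd q" "fst p < snd p" using p q unfolding PS_def by auto
    ultimately show False using e by auto
  qed
  have u: "fst ` PS n S \<union> snd ` PS n S = \<Union>S"
  proof
    show "fst ` PS n S \<union> snd ` PS n S \<subseteq> \<Union>S"
    proof
      fix x assume "x \<in> fst ` PS n S \<union> snd ` PS n S"
      then obtain p where p: "p \<in> PS n S" "x = fst p \<or> x = snd p" by blast
      then have "{fst p, snd p} \<in> S" unfolding PS_def by auto
      then show "x \<in> \<Union>S" using p(2) by blast
    qed
  next
    show "\<Union>S \<subseteq> fst ` PS n S \<union> snd ` PS n S"
    proof
      fix x assume "x \<in> \<Union>S"
      then obtain P where P: "P \<in> S" "x \<in> P" by auto
      obtain a b where ab: "a < b" "b < n" "P = {a,b}" using sif_pair[OF S P(1)] by blast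
      then have "(a,b) \<in> PS n S" using P unfolding PS_def by auto
      then show "x \<in> fst ` PS n S \<union> snd ` PS n S" using ab P by force
    qed
  qed
  have "(\<Prod>p\<in>PS n S. h (fst p) * h (snd p)) = (\<Prod>p\<in>PS n S. h (fst p)) * (\<Prod>p\<in>PS n S. h (snd p))"
    by (rule prod.distrib)
  also have "\<dots> = (\<Prod>x\<in>fst ` PS n S. h x) * (\<Prod>x\<in>snd ` PS n S. h x)"
    using prod.reindex[OF i1, of h] prod.reindex[OF i2, of h] by (simp add: o_def)
  also have "\<dots> = (\<Prod>x\<in>fst ` PS n S \<union> snd ` PS n S. h x)"
    by (rule prod.union_disjoint[symmetric]) (use PS_finite d in auto)
  finally show ?thesis using u by simp
qed

lemma prod_sign_card:
  fixes T :: "nat set"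
  assumes "finite A"
  shows "(\<Prod>x\<in>A. if x \<in> T then -1 else (1::real)) = (-1) ^ card (A \<inter> T)"
proof -
  have "(\<Prod>x\<in>A. if x \<in> T then -1 else (1::real)) = (\<Prod>x\<in>A \<inter> {x. x\<in>T}. -1) * (\<Prod>x\<in>A \<inter> - {x. x\<in>T}. 1)"
    by (rule prod.If_cases) (rule assms)
  then show ?thesis by simp
qed

context
  fixes del :: "nat \<Rightarrow> 'a::real_algebra_1"
  assumes DC: "\<forall>i\<in>{1..5}. \<forall>j\<in>{1..5}. del i * del j = del j * del i"
begin

lemma DS_transfer:
  fixes h :: "nat \<Rightarrow> real" and f :: "nat \<Rightarrow> nat"
  assumes S: "S \<in> sif n" and lI: "length I = n" and lJ: "length J = n" and f: "inj f"
    and PSe: "PS n S' = map_prod f f ` PS n S"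
    and ckr: "\<And>a b. (a,b) \<in> PS n S \<Longrightarrow> ck J (f a) (f b) = ck I a b * (h a * h b)"
    and tkr: "\<And>a b. (a,b) \<in> PS n S \<Longrightarrow> tk J (f a) (f b) = tk I a b"
  shows "DS del J S' = of_real (\<Prod>x\<in>\<Union>S. h x) * DS del I S"
proof -
  have ig: "inj_on (map_prod f f) (PS n S)" using f by (auto intro: inj_onI simp: inj_eq)
  have "(\<Prod>p\<in>PS n S'. ck J (fst p) (snd p)) = (\<Prod>p\<in>PS n S. ck J (f (fst p)) (f (snd p)))"
    unfolding PSe by (subst prod.reindex[OF ig]) (simp add: o_def)
  also have "\<dots> = (\<Prod>p\<in>PS n S. ck I (fst p) (snd p) * (h (fst p) * h (snd p)))"
    by (rule prod.cong) (auto intro: ckr)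
  also have "\<dots> = (\<Prod>p\<in>PS n S. ck I (fst p) (snd p)) * (\<Prod>p\<in>PS n S. h (fst p) * h (snd p))"
    by (rule prod.distrib)
  also have "\<dots> = (\<Prod>p\<in>PS n S. ck I (fst p) (snd p)) * (\<Prod>x\<in>\<Union>S. h x)"
    using prod_PS_union[OF S] by simp
  finally have 1: "(\<Prod>p\<in>PS n S'. ck J (fst p) (snd p)) = \<dots>" .
  have "image_mset (\<lambda>p. tk J (fst p) (snd p)) (mset_set (PS n S')) =
        image_mset (\<lambda>p. tk J (fst p) (snd p)) (image_mset (map_prod f f) (mset_set (PS n S)))"
    unfolding PSe by (simp add: image_mset_mset_set[OF ig])
  also have "\<dots> = image_mset (\<lambda>p. tk J (f (fst p)) (f (snd p))) (mset_set (PS n S))"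
    by (simp add: multiset.map_comp o_def)
  also have "\<dots> = image_mset (\<lambda>p. tk I (fst p) (snd p)) (mset_set (PS n S))"
    by (rule image_mset_cong) (use PS_finite tkr in auto)
  finally have 2: "image_mset (\<lambda>p. tk J (fst p) (snd p)) (mset_set (PS n S')) = \<dots>" .
  show ?thesis
    unfolding DS_rep[OF DC, of J] DS_rep[OF DC, of I] lI lJ 1 2
    by (simp add: of_real_def)
qed

lemma DS_insert:
  assumes S: "S \<in> sif n" and lI: "length I = n" and P: "(k,l) \<notin> PS n S"
    and PSe: "PS n S' = insert (k,l) (PS n S)"
  shows "DS del I S' = Dkl del I k l * DS del I S"
proof -
  have fin: "finite (PS n S)" by (rule PS_finite)
  define M where "M = image_mset (\<lambda>p. tk I (fst p) (snd p)) (mset_set (PS n S))"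
  have sub: "set_mset M \<subseteq> {1..5}"
    unfolding M_def using tk_in by auto
  have dm: "DM del (add_mset (tk I k l) M) = del (tk I k l) * DM del M"
    by (rule DM_add[OF DC tk_in sub])
  show ?thesis
    unfolding DS_rep[OF DC, of I] lI PSe Dkl_rep
    using fin P
    by (simp add: dm flip: M_def) (simp add: of_real_def ac_simps)
qed

end

lemma crosses2:
  assumes "a \<noteq> b" "c \<noteq> e"
  shows "crosses {a,b} {c,e} \<longleftrightarrow> ((min c e < a \<and> a < max c e) \<noteq> (min c e < b \<and> b < max c e))"
proof -
  have mn: "Min {c,e} = min c e" and mx: "Max {c,e} = max c e" by auto
  define Q where "Q = (\<lambda>x. min c e < x \<and> x < max c e)"
  have "{x\<in>{a,b}. Min {c,e} < x \<and> x < Max {c,e}} = {x\<in>{a,b}. Q x}" unfolding mn mx Q_def by simp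
  moreover have "card {x\<in>{a,b}. Q x} = 1 \<longleftrightarrow> Q a \<noteq> Q b"
  proof -
    have e: "{x\<in>{a,b}. Q x} = (if Q a then {a} else {}) \<union> (if Q b then {b} else {})" by auto
    show ?thesis unfolding e using assms(1) by (cases "Q a"; cases "Q b") auto
  qed
  ultimately show ?thesis unfolding crosses_def Q_def by simp
qed

definition sw :: "nat \<Rightarrow> nat \<Rightarrow> nat" where
  "sw k x = (if x = k then Suc k else if x = Suc k then k else x)"

lemma sw_sw[simp]: "sw k (sw k x) = x" by (simp add: sw_def)
lemma sw_inj: "inj (sw k)" by (metis injI sw_sw)
lemma sw_eq_iff[simp]: "sw k x = sw k y \<longleftrightarrow> x = y" by (metis sw_sw)
lemma sw_lt: "x < n \<Longrightarrow> Suc k < n \<Longrightarrow> sw k x < n" by (simp add: sw_def)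
lemma sw_less: "x < y \<Longrightarrow> \<not>(x = k \<and> y = Suc k) \<Longrightarrow> sw k x < sw k y" by (auto simp: sw_def)

definition btw :: "nat \<Rightarrow> nat \<Rightarrow> nat \<Rightarrow> bool" where
  "btw c e x = (c < x \<and> x < e \<or> e < x \<and> x < c)"

lemma crosses_btw: "a \<noteq> b \<Longrightarrow> c \<noteq> e \<Longrightarrow> crosses {a,b} {c,e} = (btw c e a \<noteq> btw c e b)"
  by (simp add: crosses2 btw_def min_def max_def) linarith

lemma cr_sym:
  assumes "distinct [a,b,c,e]" "a < b" "c < e"
  shows "crosses {a,b} {c,e} = crosses {c,e} {a,b}"
proof -
  have "crosses {a,b} {c,e} = ((c < a \<and> a < e) \<noteq> (c < b \<and> b < e))"
    using assms by (simp add: crosses2 min_def max_def)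
  moreover have "crosses {c,e} {a,b} = ((a < c \<and> c < b) \<noteq> (a < e \<and> e < b))"
    using assms by (simp add: crosses2 min_def max_def)
  ultimately show ?thesis using assms
    by (cases "c < a"; cases "a < e"; cases "c < b"; cases "b < e"; simp; linarith?)
qed

definition adj :: "nat \<Rightarrow> nat \<Rightarrow> nat \<Rightarrow> bool" where
  "adj k x y = (x = k \<and> y = Suc k \<or> x = Suc k \<and> y = k)"

lemma btw_alt: "c \<noteq> e \<Longrightarrow> u \<noteq> c \<Longrightarrow> u \<noteq> e \<Longrightarrow> btw c e u = ((c < u) \<noteq> (e < u))"
  unfolding btw_def by auto

lemma sw_cmp: "x \<noteq> y \<Longrightarrow> (sw k y < sw k x) = ((y < x) \<noteq> adj k x y)"
  unfolding sw_def adj_def by auto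

lemma btw_sw:
  assumes "distinct [u,c,e]"
  shows "btw (sw k c) (sw k e) (sw k u) = (btw c e u \<noteq> (adj k u c \<or> adj k u e))"
proof -
  have n: "sw k c \<noteq> sw k e" "sw k u \<noteq> sw k c" "sw k u \<noteq> sw k e" using assms by auto
  have "btw (sw k c) (sw k e) (sw k u) = ((sw k c < sw k u) \<noteq> (sw k e < sw k u))"
    using n by (simp add: btw_alt)
  also have "\<dots> = (((c < u) \<noteq> adj k u c) \<noteq> ((e < u) \<noteq> adj k u e))"
    using assms by (simp add: sw_cmp)
  also have "btw c e u = ((c < u) \<noteq> (e < u))" using assms by (simp add: btw_alt)
  moreover have "\<not> (adj k u c \<and> adj k u e)" using assms unfolding adj_def by auto
  ultimately show ?thesis by blast
qed

lemma cr_sw: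
  assumes d: "distinct [a,b,c,e]"
  shows "crosses {sw k a, sw k b} {sw k c, sw k e} \<longleftrightarrow>
     (crosses {a,b} {c,e} \<noteq> ((k \<in> {a,b} \<and> Suc k \<in> {c,e}) \<or> (Suc k \<in> {a,b} \<and> k \<in> {c,e})))"
proof -
  have d1: "distinct [a,c,e]" and d2: "distinct [b,c,e]" using d by auto
  have n1: "sw k a \<noteq> sw k b" "sw k c \<noteq> sw k e" using d by auto
  have "crosses {sw k a, sw k b} {sw k c, sw k e} = (btw (sw k c) (sw k e) (sw k a) \<noteq> btw (sw k c) (sw k e) (sw k b))"
    by (rule crosses_btw[OF n1])
  also have "\<dots> = ((btw c e a \<noteq> (adj k a c \<or> adj k a e)) \<noteq> (btw c e b \<noteq> (adj k b c \<or> adj k b e)))"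
    unfolding btw_sw[OF d1] btw_sw[OF d2] ..
  also have "crosses {a,b} {c,e} = (btw c e a \<noteq> btw c e b)"
    using d by (intro crosses_btw) auto
  moreover have "\<not> ((adj k a c \<or> adj k a e) \<and> (adj k b c \<or> adj k b e))"
    using d unfolding adj_def by auto
  moreover have "((adj k a c \<or> adj k a e) \<or> (adj k b c \<or> adj k b e)) =
     ((k \<in> {a,b} \<and> Suc k \<in> {c,e}) \<or> (Suc k \<in> {a,b} \<and> k \<in> {c,e}))"
    unfolding adj_def by auto
  ultimately show ?thesis by blast
qed

definition CRS :: "nat set set \<Rightarrow> nat set set set" where
  "CRS S = {{P, Q} | P Q. P \<in> S \<and> Q \<in> S \<and> P \<noteq> Q \<and> crosses P Q}"

lemma ncross_CRS: "ncross S = card (CRS S)" unfolding ncross_def CRS_def ..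

lemma CRS_finite: "finite S \<Longrightarrow> finite (CRS S)"
proof -
  assume "finite S"
  have "CRS S \<subseteq> (\<lambda>(P,Q). {P,Q}) ` (S \<times> S)" unfolding CRS_def by auto
  then show ?thesis by (rule finite_subset) (use \<open>finite S\<close> in auto)
qed

lemma ncross_insert:
  assumes S: "S \<in> sif n" and k: "k \<notin> \<Union>S" "Suc k \<notin> \<Union>S"
  shows "ncross (insert {k, Suc k} S) = ncross S"
proof -
  have nc: "\<not> crosses {k, Suc k} Q \<and> \<not> crosses Q {k, Suc k}" if Q: "Q \<in> S" for Q
  proof -
    obtain c e where ce: "c < e" "e < n" "Q = {c,e}" using sif_pair[OF S Q] by blast
    have "c \<noteq> k" "c \<noteq> Suc k" "e \<noteq> k" "e \<noteq> Suc k" using k Q ce by auto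
    then show ?thesis using ce by (simp add: crosses2 min_def max_def) linarith
  qed
  have "CRS (insert {k, Suc k} S) = CRS S"
  proof
    show "CRS (insert {k, Suc k} S) \<subseteq> CRS S"
    proof
      fix X assume "X \<in> CRS (insert {k, Suc k} S)"
      then obtain P Q where X: "X = {P,Q}" "P \<in> insert {k, Suc k} S" "Q \<in> insert {k, Suc k} S" "P \<noteq> Q" "crosses P Q"
        unfolding CRS_def by blast
      then have "P \<in> S" "Q \<in> S" using nc by auto
      then show "X \<in> CRS S" using X unfolding CRS_def by blast
    qed
  next
    show "CRS S \<subseteq> CRS (insert {k, Suc k} S)" unfolding CRS_def by blast
  qed
  then show ?thesis by (simp add: ncross_CRS)
qed

definition sg :: "nat \<Rightarrow> nat set set \<Rightarrow> nat set set" where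
  "sg k S = (`) (sw k) ` S"

lemma sg_sg[simp]: "sg k (sg k S) = S"
  unfolding sg_def by (simp add: image_image)

lemma img_sw_img[simp]: "sw k ` (sw k ` P) = P" by (simp add: image_image)

lemma parity_toggle:
  assumes "finite A" "finite B" "A - {z} = B - {z}" "(z \<in> A) \<noteq> (z \<in> B)"
  shows "(-1::real) ^ card A = - ((-1) ^ card B)"
proof (cases "z \<in> B")
  case True
  then have "z \<notin> A" using assms by auto
  then have hA: "A = B - {z}" using assms by auto
  have "card A = card B - 1" unfolding hA using True assms(2) by (simp add: card_Diff_singleton)
  moreover have "card B > 0" using True assms by (auto simp: card_gt_0_iff)
  ultimately show ?thesis by (cases "card B") auto
next
  case False
  then have "z \<in> A" using assms by auto
  then have hB: "B = A - {z}" using assms False by auto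
  have "card B = card A - 1" unfolding hB using \<open>z \<in> A\<close> assms(1) by (simp add: card_Diff_singleton)
  moreover have "card A > 0" using \<open>z \<in> A\<close> assms by (auto simp: card_gt_0_iff)
  ultimately show ?thesis by (cases "card A") auto
qed

lemma pair_mem:
  assumes "P1 \<noteq> Q1"
  shows "{P1,Q1} \<in> {{P, Q} | P Q. P \<in> S \<and> Q \<in> S \<and> P \<noteq> Q \<and> R P Q} \<longleftrightarrow>
         P1 \<in> S \<and> Q1 \<in> S \<and> (R P1 Q1 \<or> R Q1 P1)"
  using assms by (auto simp: doubleton_eq_iff)

lemma ncross_sg:
  assumes S: "S \<in> sif n" and P0: "{k, Suc k} \<notin> S"
  shows "(-1::real) ^ ncross (sg k S) = (if k \<in> \<Union>S \<and> Suc k \<in> \<Union>S then -1 else 1) * (-1) ^ ncross S"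
proof -
  define CR' where "CR' = {{P, Q} | P Q. P \<in> S \<and> Q \<in> S \<and> P \<noteq> Q \<and> crosses (sw k ` P) (sw k ` Q)}"
  have "S \<subseteq> Pow {0..<n}" using S unfolding sif_def by auto
  then have fS: "finite S" by (rule finite_subset) simp
  have e1: "CRS (sg k S) = (`) ((`) (sw k)) ` CR'"
  proof
    show "CRS (sg k S) \<subseteq> (`) ((`) (sw k)) ` CR'"
    proof
      fix X assume "X \<in> CRS (sg k S)"
      then obtain P Q where X: "X = {sw k ` P, sw k ` Q}" "P \<in> S" "Q \<in> S" "sw k ` P \<noteq> sw k ` Q"
        "crosses (sw k ` P) (sw k ` Q)"
        unfolding CRS_def sg_def by blast
      then have "{P,Q} \<in> CR'" unfolding CR'_def by blast
      moreover have "X = (`) (sw k) ` {P,Q}" using X by simp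
      ultimately show "X \<in> (`) ((`) (sw k)) ` CR'" by blast
    qed
  next
    show "(`) ((`) (sw k)) ` CR' \<subseteq> CRS (sg k S)"
    proof
      fix X assume "X \<in> (`) ((`) (sw k)) ` CR'"
      then obtain P Q where X: "X = (`) (sw k) ` {P,Q}" "P \<in> S" "Q \<in> S" "P \<noteq> Q"
        "crosses (sw k ` P) (sw k ` Q)"
        unfolding CR'_def by blast
      have "sw k ` P \<noteq> sw k ` Q" using X(4) by (metis img_sw_img)
      moreover have "sw k ` P \<in> sg k S" "sw k ` Q \<in> sg k S" using X unfolding sg_def by auto
      moreover have "X = {sw k ` P, sw k ` Q}" using X by simp
      ultimately show "X \<in> CRS (sg k S)" using X(5) unfolding CRS_def by blast
    qed
  qed
  have inj2: "inj ((`) ((`) (sw k)) :: nat set set \<Rightarrow> nat set set)"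
  proof (rule injI)
    fix X Y :: "nat set set"
    assume "(`) (sw k) ` X = (`) (sw k) ` Y"
    then have "(`) (sw k) ` ((`) (sw k) ` X) = (`) (sw k) ` ((`) (sw k) ` Y)" by simp
    then show "X = Y" by (simp add: image_image)
  qed
  have c1: "ncross (sg k S) = card CR'"
    unfolding ncross_CRS e1 by (rule card_image) (rule inj_on_subset[OF inj2], simp)
  have fCR': "finite CR'"
  proof -
    have "CR' \<subseteq> (\<lambda>(P,Q). {P,Q}) ` (S \<times> S)" unfolding CR'_def by auto
    then show ?thesis by (rule finite_subset) (use fS in auto)
  qed
  have fCR: "finite (CRS S)" by (rule CRS_finite[OF fS])
  have swimg: "sw k ` {a,b} = {sw k a, sw k b}" for a b by simp
  have dist: "distinct [a,b,c,e]" if "P \<in> S" "Q \<in> S" "P \<noteq> Q" "P = {a,b}" "Q = {c,e}" "a < b" "c < e" for P Q a b c e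
    using sif_disj[OF S that(1,2,3)] that by auto
  show ?thesis
  proof (cases "k \<in> \<Union>S \<and> Suc k \<in> \<Union>S")
    case False
    have "crosses (sw k ` P) (sw k ` Q) = crosses P Q" if h: "P \<in> S" "Q \<in> S" "P \<noteq> Q" for P Q
    proof -
      obtain a b where ab: "a < b" "b < n" "P = {a,b}" using sif_pair[OF S h(1)] by blast
      obtain c e where ce: "c < e" "e < n" "Q = {c,e}" using sif_pair[OF S h(2)] by blast
      have d: "distinct [a,b,c,e]" by (rule dist[OF h ab(3) ce(3) ab(1) ce(1)])
      have "\<not> ((k \<in> {a,b} \<and> Suc k \<in> {c,e}) \<or> (Suc k \<in> {a,b} \<and> k \<in> {c,e}))"
        using False h ab ce by blast
      then show ?thesis unfolding ab(3) ce(3) swimg cr_sw[OF d] by simp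
    qed
    then have "CR' = CRS S" unfolding CR'_def CRS_def by meson
    then show ?thesis using c1 False by (simp add: ncross_CRS)
  next
    case True
    then obtain P1 Q1 where P1: "P1 \<in> S" "k \<in> P1" and Q1: "Q1 \<in> S" "Suc k \<in> Q1" by blast
    have PQ: "P1 \<noteq> Q1"
    proof
      assume "P1 = Q1"
      obtain a b where ab: "a < b" "b < n" "P1 = {a,b}" using sif_pair[OF S P1(1)] by blast
      then have "P1 = {k, Suc k}" using P1 Q1 \<open>P1 = Q1\<close> by auto
      then show False using P0 P1 by simp
    qed
    have same: "crosses (sw k ` P) (sw k ` Q) = crosses P Q"
      if h: "P \<in> S" "Q \<in> S" "P \<noteq> Q" "{P,Q} \<noteq> {P1,Q1}" for P Q
    proof -
      obtain a b where ab: "a < b" "b < n" "P = {a,b}" using sif_pair[OF S h(1)] by blast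
      obtain c e where ce: "c < e" "e < n" "Q = {c,e}" using sif_pair[OF S h(2)] by blast
      have d: "distinct [a,b,c,e]" by (rule dist[OF h(1,2,3) ab(3) ce(3) ab(1) ce(1)])
      have "\<not> ((k \<in> P \<and> Suc k \<in> Q) \<or> (Suc k \<in> P \<and> k \<in> Q))"
      proof
        assume "(k \<in> P \<and> Suc k \<in> Q) \<or> (Suc k \<in> P \<and> k \<in> Q)"
        then show False
        proof
          assume "k \<in> P \<and> Suc k \<in> Q"
          then have "P = P1" "Q = Q1" using sif_same[OF S] h P1 Q1 by blast+
          then show False using h(4) by simp
        next
          assume "Suc k \<in> P \<and> k \<in> Q"
          then have "P = Q1" "Q = P1" using sif_same[OF S] h P1 Q1 by blast+
          then show False using h(4) by (simp add: insert_commute)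
        qed
      qed
      then show ?thesis unfolding ab(3) ce(3) swimg cr_sw[OF d] by (simp add: ab(3) ce(3))
    qed
    obtain a b where ab: "a < b" "b < n" "P1 = {a,b}" using sif_pair[OF S P1(1)] by blast
    obtain c e where ce: "c < e" "e < n" "Q1 = {c,e}" using sif_pair[OF S Q1(1)] by blast
    have d: "distinct [a,b,c,e]" by (rule dist[OF P1(1) Q1(1) PQ ab(3) ce(3) ab(1) ce(1)])
    have d2: "distinct [c,e,a,b]" using d by auto
    have tog1: "crosses (sw k ` P1) (sw k ` Q1) = (\<not> crosses P1 Q1)"
      unfolding ab(3) ce(3) swimg cr_sw[OF d] using P1 Q1 ab ce by auto
    have tog2: "crosses (sw k ` Q1) (sw k ` P1) = (\<not> crosses Q1 P1)"
      unfolding ab(3) ce(3) swimg cr_sw[OF d2] using P1 Q1 ab ce by auto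
    have sym: "crosses Q1 P1 = crosses P1 Q1" unfolding ab(3) ce(3) using cr_sym[OF d ab(1) ce(1)] by simp
    have "CR' - {{P1,Q1}} = CRS S - {{P1,Q1}}"
    proof -
      have "X \<in> CR' \<longleftrightarrow> X \<in> CRS S" if hX: "X \<noteq> {P1,Q1}" for X
      proof
        assume "X \<in> CR'"
        then obtain P Q where X: "X = {P,Q}" "P \<in> S" "Q \<in> S" "P \<noteq> Q" "crosses (sw k ` P) (sw k ` Q)"
          unfolding CR'_def by blast
        then show "X \<in> CRS S" using same[of P Q] hX X unfolding CRS_def by blast
      next
        assume "X \<in> CRS S"
        then obtain P Q where X: "X = {P,Q}" "P \<in> S" "Q \<in> S" "P \<noteq> Q" "crosses P Q"
          unfolding CRS_def by blast
        then show "X \<in> CR'" using same[of P Q] hX X unfolding CR'_def by blast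
      qed
      then show ?thesis by blast
    qed
    moreover have "({P1,Q1} \<in> CR') \<noteq> ({P1,Q1} \<in> CRS S)"
      unfolding CR'_def CRS_def pair_mem[OF PQ] using P1 Q1 tog1 tog2 sym by auto
    ultimately have "(-1::real) ^ card CR' = - ((-1) ^ card (CRS S))"
      by (rule parity_toggle[OF fCR' fCR])
    then show ?thesis using c1 True by (simp add: ncross_CRS)
  qed
qed

definition ok :: "nat \<times> nat \<Rightarrow> bool" where
  "ok x \<longleftrightarrow> fst x \<in> {1..5} \<and> snd x \<in> {1..5}"

lemma valid_ok: "valid_idx I \<longleftrightarrow> (\<forall>p\<in>set I. ok p)"
  unfolding valid_idx_def ok_def ..

definition br :: "(nat \<Rightarrow> nat \<Rightarrow> 'a::real_algebra_1) \<Rightarrow> nat \<times> nat \<Rightarrow> nat \<times> nat \<Rightarrow> 'a" where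
  "br dd x y = dd (fst x) (snd x) * dd (fst y) (snd y) + dd (fst y) (snd y) * dd (fst x) (snd x)"

lemma dmon_append: "dmon dd (xs @ ys) = dmon dd xs * dmon dd ys"
  unfolding dmon_def by simp

lemma dmon_single: "dmon dd [x] = dd (fst x) (snd x)"
  unfolding dmon_def by (simp add: case_prod_beta)

lemma dmon_Nil: "dmon dd [] = 1"
  unfolding dmon_def by simp

lemma comm_int_scaled:
  assumes "a * T = T * (a::'a::ring_1)"
  shows "a * (of_int z * T) = (of_int z * T) * a"
proof -
  have "a * (of_int z * T) = (a * of_int z) * T" by (simp only: mult.assoc)
  also have "\<dots> = (of_int z * a) * T" by (simp only: mult_of_int_commute)
  also have "\<dots> = of_int z * (a * T)" by (simp only: mult.assoc)
  also have "\<dots> = of_int z * (T * a)" using assms by simp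
  also have "\<dots> = (of_int z * T) * a" by (simp only: mult.assoc)
  finally show ?thesis .
qed

context
  fixes del :: "nat \<Rightarrow> 'a::real_algebra_1" and dd :: "nat \<Rightarrow> nat \<Rightarrow> 'a"
  assumes R: "Uminus_rels del dd"
begin

lemma DC: "\<forall>i\<in>{1..5}. \<forall>j\<in>{1..5}. del i * del j = del j * del i"
  using R unfolding Uminus_rels_def by blast

lemma DDC: "i \<in> {1..5} \<Longrightarrow> ok z \<Longrightarrow> del i * dd (fst z) (snd z) = dd (fst z) (snd z) * del i"
  using R unfolding Uminus_rels_def ok_def by blast

lemma ANTI: "ok z \<Longrightarrow> dd (snd z) (fst z) = - dd (fst z) (snd z)"
  using R unfolding Uminus_rels_def ok_def by (metis minus_minus)

lemma br_eq: "ok x \<Longrightarrow> ok y \<Longrightarrow> br dd x y = of_int (eps (fst x) (snd x) (fst y) (snd y)) * del (tt (fst x) (snd x) (fst y) (snd y))"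
  using R unfolding Uminus_rels_def ok_def br_def by blast

lemma br_sym: "br dd x y = br dd y x"
  unfolding br_def by (simp add: add.commute)

lemma comm_del_br:
  assumes x: "ok x" and y: "ok y" and i: "i \<in> {1..5}"
  shows "del i * br dd x y = br dd x y * del i"
proof (cases "eps (fst x) (snd x) (fst y) (snd y) = 0")
  case True then show ?thesis using br_eq[OF x y] by simp
next
  case False
  then have t: "tt (fst x) (snd x) (fst y) (snd y) \<in> {1..5}" by (rule tt_in)
  have "del i * del (tt (fst x) (snd x) (fst y) (snd y)) = del (tt (fst x) (snd x) (fst y) (snd y)) * del i"
    using DC t i by blast
  then show ?thesis unfolding br_eq[OF x y] by (rule comm_int_scaled)
qed

lemma comm_dd_br:
  assumes x: "ok x" and y: "ok y" and z: "ok z"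
  shows "dd (fst z) (snd z) * br dd x y = br dd x y * dd (fst z) (snd z)"
proof (cases "eps (fst x) (snd x) (fst y) (snd y) = 0")
  case True then show ?thesis using br_eq[OF x y] by simp
next
  case False
  then have t: "tt (fst x) (snd x) (fst y) (snd y) \<in> {1..5}" by (rule tt_in)
  have c: "dd (fst z) (snd z) * del (tt (fst x) (snd x) (fst y) (snd y)) = del (tt (fst x) (snd x) (fst y) (snd y)) * dd (fst z) (snd z)"
    using DDC[OF t z] by simp
  show ?thesis unfolding br_eq[OF x y] using c by (rule comm_int_scaled)
qed

lemma br_DS:
  assumes x: "ok x" and y: "ok y"
  shows "br dd x y * DS del I S = DS del I S * br dd x y"
proof -
  define M where "M = image_mset (\<lambda>p. tk I (fst p) (snd p)) (mset_set (PS (length I) S))"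
  have Ms: "set_mset M \<subseteq> {1..5}" unfolding M_def using tk_in by auto
  have c1: "br dd x y * DM del M = DM del M * br dd x y"
    unfolding DM_def
    by (rule comm_prod_list) (use Ms comm_del_br[OF x y] in auto)
  show ?thesis unfolding DS_rep[OF DC, of I] M_def[symmetric]
    by (metis c1 mult.assoc of_real_comm)
qed

lemma br_dmon:
  assumes x: "ok x" and y: "ok y" and xs: "\<forall>p\<in>set xs. ok p"
  shows "br dd x y * dmon dd xs = dmon dd xs * br dd x y"
  unfolding dmon_def
  by (rule comm_prod_list) (use xs comm_dd_br[OF x y] in \<open>auto simp: case_prod_beta\<close>)

lemma Dkl_adj:
  assumes x: "ok x" and y: "ok y" and I: "I = L @ [x,y] @ R"
  shows "Dkl del I (length L) (Suc (length L)) = - ((1/2) *\<^sub>R br dd x y)"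
proof -
  have "I ! length L = x" "I ! Suc (length L) = y" using I by (auto simp: nth_append)
  moreover have "(-1::int) ^ (length L + Suc (length L)) = -1" by simp
  ultimately show ?thesis unfolding Dkl_def br_eq[OF x y]
    by (simp add: case_prod_beta)
qed

end

lemma nth_mid: "(L @ [u,v] @ R) ! i = (if i < length L then L!i else if i = length L then u
   else if i = Suc (length L) then v else R ! (i - Suc (Suc (length L))))"
proof -
  consider "i < length L" | "i = length L" | "i = Suc (length L)" | "i > Suc (length L)" by linarith
  then show ?thesis
  proof cases
    case 4
    then obtain j where j: "i = Suc (Suc (length L)) + j" by (metis less_imp_add_positive Suc_le_eq le_add_diff_inverse less_or_eq_imp_le)
    then show ?thesis by (simp add: nth_append)
  qed (auto simp: nth_append)
qed

lemma nths_cong: "(\<And>i. i < length xs \<Longrightarrow> i \<in> A \<longleftrightarrow> i \<in> B) \<Longrightarrow> nths xs A = nths xs B"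
proof (induct xs arbitrary: A B)
  case Nil then show ?case by simp
next
  case (Cons x xs)
  have "nths xs {j. Suc j \<in> A} = nths xs {j. Suc j \<in> B}"
    by (rule Cons(1)) (use Cons(2) in auto)
  moreover have "0 \<in> A \<longleftrightarrow> 0 \<in> B" using Cons(2) by simp
  ultimately show ?case by (simp add: nths_Cons)
qed

lemma nths_mid: "nths (L @ [u,v] @ R) A = nths L A @ (if length L \<in> A then [u] else []) @
   (if Suc (length L) \<in> A then [v] else []) @ nths R {j. Suc (Suc (j + length L)) \<in> A}"
  by (simp add: nths_append nths_Cons)

lemma sif_sub: "S \<in> sif n \<Longrightarrow> S' \<subseteq> S \<Longrightarrow> S' \<in> sif n"
  unfolding sif_def by blast

lemma sg_sif:
  assumes S: "S \<in> sif n" and k: "Suc k < n"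
  shows "sg k S \<in> sif n"
proof -
  have A: "P' \<subseteq> {0..<n} \<and> card P' = 2" if h: "P' \<in> sg k S" for P'
  proof -
    obtain P where P: "P \<in> S" "P' = sw k ` P" using h unfolding sg_def by blast
    have "P \<subseteq> {0..<n}" "card P = 2" using S P unfolding sif_def by auto
    moreover have "card (sw k ` P) = card P" by (rule card_image) (rule inj_on_subset[OF sw_inj], simp)
    ultimately show ?thesis using P sw_lt[OF _ k] by auto
  qed
  have B: "P' \<inter> Q' = {}" if h: "P' \<in> sg k S" "Q' \<in> sg k S" "P' \<noteq> Q'" for P' Q'
  proof -
    obtain P where P: "P \<in> S" "P' = sw k ` P" using h unfolding sg_def by blast
    obtain Q where Q: "Q \<in> S" "Q' = sw k ` Q" using h unfolding sg_def by blast
    have "P \<noteq> Q" using P Q h by auto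
    then have "P \<inter> Q = {}" using sif_disj[OF S P(1) Q(1)] by simp
    then show ?thesis using P Q image_Int[OF sw_inj[of k], of P Q] by simp
  qed
  show ?thesis unfolding sif_def using A B by blast
qed

lemma Union_sg: "\<Union>(sg k S) = sw k ` \<Union>S"
  unfolding sg_def by auto

lemma mem_sg: "P \<in> sg k S \<longleftrightarrow> sw k ` P \<in> S"
  unfolding sg_def by (metis image_iff img_sw_img)

lemma sw_P0: "sw k ` {k, Suc k} = {k, Suc k}"
  by (auto simp: sw_def)

lemma P0_sg: "{k, Suc k} \<in> sg k S \<longleftrightarrow> {k, Suc k} \<in> S"
  unfolding mem_sg sw_P0 ..

lemma sw_in_img: "x \<in> sw k ` U \<longleftrightarrow> sw k x \<in> U"
  by (metis image_iff sw_sw)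

lemma PS_sg:
  assumes S: "S \<in> sif n" and k: "Suc k < n" and P0: "{k, Suc k} \<notin> S"
  shows "PS n (sg k S) = map_prod (sw k) (sw k) ` PS n S"
proof (rule set_eqI)
  fix p :: "nat \<times> nat"
  obtain x y where p: "p = (x,y)" by fastforce
  have swxy: "sw k ` {x,y} = {sw k x, sw k y}" by simp
  have lhs: "p \<in> PS n (sg k S) \<longleftrightarrow> x < y \<and> y < n \<and> {sw k x, sw k y} \<in> S"
    unfolding p PS_def by (simp add: mem_sg)
  have "p \<in> map_prod (sw k) (sw k) ` PS n S \<longleftrightarrow> (sw k x, sw k y) \<in> PS n S"
  proof
    assume "p \<in> map_prod (sw k) (sw k) ` PS n S"
    then obtain a b where "(a,b) \<in> PS n S" "p = (sw k a, sw k b)" by auto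
    then show "(sw k x, sw k y) \<in> PS n S" using p by auto
  next
    assume "(sw k x, sw k y) \<in> PS n S"
    then have "map_prod (sw k) (sw k) (sw k x, sw k y) \<in> map_prod (sw k) (sw k) ` PS n S" by (rule imageI)
    then show "p \<in> map_prod (sw k) (sw k) ` PS n S" using p by simp
  qed
  also have "\<dots> \<longleftrightarrow> sw k x < sw k y \<and> sw k y < n \<and> {sw k x, sw k y} \<in> S"
    unfolding PS_def by simp
  finally have rhs: "p \<in> map_prod (sw k) (sw k) ` PS n S \<longleftrightarrow> sw k x < sw k y \<and> sw k y < n \<and> {sw k x, sw k y} \<in> S" .
  show "p \<in> PS n (sg k S) \<longleftrightarrow> p \<in> map_prod (sw k) (sw k) ` PS n S"
  proof (cases "{sw k x, sw k y} \<in> S")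
    case False then show ?thesis using lhs rhs by simp
  next
    case True
    have sub: "{sw k x, sw k y} \<subseteq> {0..<n}" using True S unfolding sif_def by blast
    then have yn: "y < n" using sw_lt[OF _ k, of "sw k y"] by simp
    have o1: "x < y \<Longrightarrow> sw k x < sw k y"
    proof -
      assume "x < y"
      moreover have "\<not> (x = k \<and> y = Suc k)"
      proof
        assume "x = k \<and> y = Suc k"
        then have "{sw k x, sw k y} = {k, Suc k}" by (auto simp: sw_def)
        then show False using True P0 by simp
      qed
      ultimately show ?thesis by (rule sw_less)
    qed
    have o2: "sw k x < sw k y \<Longrightarrow> x < y"
    proof -
      assume a: "sw k x < sw k y"
      moreover have "\<not> (sw k x = k \<and> sw k y = Suc k)"
        using True P0 by (auto simp: insert_commute)
      ultimately have "sw k (sw k x) < sw k (sw k y)" by (rule sw_less)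
      then show ?thesis by simp
    qed
    show ?thesis using lhs rhs o1 o2 yn sub by auto
  qed
qed

lemma PS_ins:
  assumes S: "S \<in> sif n" and k: "Suc k < n" "k \<notin> \<Union>S"
  shows "PS n (insert {k, Suc k} S) = insert (k, Suc k) (PS n S)" "(k, Suc k) \<notin> PS n S"
proof -
  show "PS n (insert {k, Suc k} S) = insert (k, Suc k) (PS n S)"
    using k unfolding PS_def by (auto simp: doubleton_eq_iff)
  show "(k, Suc k) \<notin> PS n S" using k unfolding PS_def by auto
qed

lemma ins_sif:
  assumes S: "S \<in> sif n" and k: "Suc k < n" "k \<notin> \<Union>S" "Suc k \<notin> \<Union>S"
  shows "insert {k, Suc k} S \<in> sif n"
proof -
  have "P \<inter> {k, Suc k} = {}" if "P \<in> S" for P using that k by auto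
  then show ?thesis using S k unfolding sif_def by (auto simp: Int_commute)
qed

definition XS :: "nat \<Rightarrow> nat \<Rightarrow> nat set set set" where
  "XS n k = {S \<in> sif n. {k, Suc k} \<in> S}"
definition YS :: "nat \<Rightarrow> nat \<Rightarrow> nat set set set" where
  "YS n k = {S \<in> sif n. k \<notin> \<Union>S \<and> Suc k \<notin> \<Union>S}"
definition ZS :: "nat \<Rightarrow> nat \<Rightarrow> nat set set set" where
  "ZS n k = sif n - (XS n k \<union> YS n k)"

lemma XS_YS:
  assumes k: "Suc k < n"
  shows "XS n k = insert {k, Suc k} ` YS n k" "inj_on (insert {k, Suc k}) (YS n k)"
proof -
  show "XS n k = insert {k, Suc k} ` YS n k"
  proof
    show "XS n k \<subseteq> insert {k, Suc k} ` YS n k"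
    proof
      fix S assume "S \<in> XS n k"
      then have S: "S \<in> sif n" "{k, Suc k} \<in> S" unfolding XS_def by auto
      define S' where "S' = S - {{k, Suc k}}"
      have "S' \<in> sif n" unfolding S'_def by (rule sif_sub[OF S(1)]) auto
      moreover have "k \<notin> \<Union>S'" "Suc k \<notin> \<Union>S'"
        using sif_disj[OF S(1) _ S(2)] unfolding S'_def by blast+
      ultimately have "S' \<in> YS n k" unfolding YS_def by simp
      moreover have "S = insert {k, Suc k} S'" using S unfolding S'_def by auto
      ultimately show "S \<in> insert {k, Suc k} ` YS n k" by blast
    qed
  next
    show "insert {k, Suc k} ` YS n k \<subseteq> XS n k"
      using ins_sif[OF _ k] unfolding XS_def YS_def by auto
  qed
  show "inj_on (insert {k, Suc k}) (YS n k)"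
  proof (rule inj_onI)
    fix A B assume "A \<in> YS n k" "B \<in> YS n k" "insert {k, Suc k} A = insert {k, Suc k} B"
    moreover have "{k, Suc k} \<notin> A" "{k, Suc k} \<notin> B" using calculation unfolding YS_def by auto
    ultimately show "A = B" by (metis insert_ident)
  qed
qed

lemma sg_ZS:
  assumes k: "Suc k < n" and S: "S \<in> ZS n k"
  shows "sg k S \<in> ZS n k"
proof -
  have S1: "S \<in> sif n" "{k, Suc k} \<notin> S" "k \<in> \<Union>S \<or> Suc k \<in> \<Union>S"
    using S unfolding ZS_def XS_def YS_def by auto
  have "sg k S \<in> sif n" by (rule sg_sif[OF S1(1) k])
  moreover have "{k, Suc k} \<notin> sg k S" using S1 by (simp add: P0_sg)
  moreover have "k \<in> \<Union>(sg k S) \<or> Suc k \<in> \<Union>(sg k S)"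
    using S1(3) unfolding Union_sg sw_in_img by (auto simp: sw_def)
  ultimately show ?thesis unfolding ZS_def XS_def YS_def by auto
qed

lemma sif_split:
  assumes k: "Suc k < n"
  shows "sum f (sif n) = sum (\<lambda>S. f (insert {k, Suc k} S) + f S) (YS n k) + sum f (ZS n k)"
proof -
  have fin: "finite (sif n)" by (rule sif_finite)
  have sub: "XS n k \<union> YS n k \<subseteq> sif n" unfolding XS_def YS_def by auto
  have "sum f (sif n) = sum f (sif n - (XS n k \<union> YS n k)) + sum f (XS n k \<union> YS n k)"
    by (rule sum.subset_diff[OF sub fin])
  also have "sum f (XS n k \<union> YS n k) = sum f (XS n k) + sum f (YS n k)"
    by (rule sum.union_disjoint) (use finite_subset[OF sub fin] in \<open>auto simp: XS_def YS_def\<close>)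
  also have "sum f (XS n k) = sum (\<lambda>S. f (insert {k, Suc k} S)) (YS n k)"
    unfolding XS_YS(1)[OF k] by (subst sum.reindex[OF XS_YS(2)[OF k]]) (simp add: o_def)
  finally show ?thesis unfolding ZS_def by (simp add: sum.distrib add_ac)
qed

lemma sum_ZS_sg:
  assumes k: "Suc k < n"
  shows "sum (\<lambda>S. f (sg k S)) (ZS n k) = sum f (ZS n k)"
  by (rule sum.reindex_bij_witness[where i="sg k" and j="sg k"]) (auto intro: sg_ZS[OF k])

lemma sign_sw: "(-1::real) ^ (sw k x) = (-1) ^ x * (if x \<in> {k, Suc k} then -1 else 1)"
  by (auto simp: sw_def)

lemma nths_ok: "\<forall>p\<in>set xs. ok p \<Longrightarrow> \<forall>p\<in>set (nths xs A). ok p"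
  by (auto simp: set_nths)

lemma dmon_Cons: "dmon dd (x # xs) = dd (fst x) (snd x) * dmon dd xs"
  unfolding dmon_def by (simp add: case_prod_beta)

lemma ofr_m1: "(of_real ((-1::real)^m) :: 'a::real_algebra_1) = of_int ((-1)^m)"
  by simp

context
  fixes del :: "nat \<Rightarrow> 'a::real_algebra_1" and dd :: "nat \<Rightarrow> nat \<Rightarrow> 'a"
  assumes R: "Uminus_rels del dd"
begin

lemma omega_adj:
  assumes I: "I = L @ [x,y] @ Rt" and J: "J = L @ [y,x] @ Rt" and V: "valid_idx I"
  shows "omega del dd J = - omega del dd I"
proof -
  define n where "n = length I"
  define k where "k = length L"
  have lJ: "length J = n" unfolding n_def I J by simp
  have k: "Suc k < n" unfolding n_def k_def I by simp
  have okx: "ok x" and oky: "ok y" and okL: "\<forall>p\<in>set L. ok p" and okR: "\<forall>p\<in>set Rt. ok p"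
    using V unfolding valid_ok I by auto
  have nthJ: "J ! sw k i = I ! i" if "i < n" for i
    unfolding I J nth_mid k_def sw_def by auto
  have nthJ2: "J ! i = I ! i" if "i \<noteq> k" "i \<noteq> Suc k" for i
    using that unfolding I J nth_mid k_def by auto
  define tI where "tI S = (of_int ((-1)^ncross S) :: 'a) * DS del I S * dmon dd (CS I S)" for S
  define tJ where "tJ S = (of_int ((-1)^ncross S) :: 'a) * DS del J S * dmon dd (CS J S)" for S
  have oI: "omega del dd I = sum tI (sif n)" unfolding omega_def tI_def n_def ..
  have oJ: "omega del dd J = sum tJ (sif n)" unfolding omega_def tJ_def lJ ..
  define P0 where "P0 = {k, Suc k}"
  have Y0: "tI (insert P0 S) + tI S + (tJ (insert P0 S) + tJ S) = 0" if SY: "S \<in> YS n k" for S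
  proof -
    have S: "S \<in> sif n" and nk: "k \<notin> \<Union>S" "Suc k \<notin> \<Union>S" using SY unfolding YS_def by auto
    note PSi = PS_ins[OF S k nk(1)]
    have nc: "ncross (insert P0 S) = ncross S" unfolding P0_def by (rule ncross_insert[OF S nk])
    have DJ: "DS del J S = DS del I S"
    proof -
      have "DS del J S = of_real (\<Prod>x\<in>\<Union>S. (\<lambda>_. 1::real) x) * DS del I S"
      proof (rule DS_transfer[OF DC[OF R] S n_def[symmetric] lJ, where f=id])
        show "inj (id::nat\<Rightarrow>nat)" by simp
        show "PS n S = map_prod id id ` PS n S" by (simp add: map_prod.id)
      next
        fix a b assume ab: "(a,b) \<in> PS n S"
        then have "a \<in> \<Union>S" "b \<in> \<Union>S" unfolding PS_def by auto
        then have "a \<noteq> k" "a \<noteq> Suc k" "b \<noteq> k" "b \<noteq> Suc k" using nk by auto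
        then have "J ! a = I ! a" "J ! b = I ! b" using nthJ2 by auto
        then show "ck J (id a) (id b) = ck I a b * (1 * 1)" "tk J (id a) (id b) = tk I a b"
          unfolding ck_def tk_def ep_def by simp_all
      qed
      then show ?thesis by simp
    qed
    have DIi: "DS del I (insert P0 S) = Dkl del I k (Suc k) * DS del I S"
      unfolding P0_def by (rule DS_insert[OF DC[OF R] S n_def[symmetric] PSi(2) PSi(1)])
    have DJi: "DS del J (insert P0 S) = Dkl del J k (Suc k) * DS del J S"
      unfolding P0_def by (rule DS_insert[OF DC[OF R] S lJ PSi(2) PSi(1)])
    have DkI: "Dkl del I k (Suc k) = - ((1/2) *\<^sub>R br dd x y)"
      unfolding k_def by (rule Dkl_adj[OF R okx oky I])
    have DkJ: "Dkl del J k (Suc k) = - ((1/2) *\<^sub>R br dd x y)"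
      unfolding k_def br_sym[OF R, of x y] by (rule Dkl_adj[OF R oky okx J])
    define A where "A = - \<Union>S"
    define RR where "RR = nths Rt {j. Suc (Suc (j + k)) \<in> A}"
    define M1 where "M1 = dmon dd (nths L A)"
    define M2 where "M2 = dmon dd RR"
    have kA: "k \<in> A" "Suc k \<in> A" using nk unfolding A_def by auto
    have CI: "CS I S = nths L A @ [x] @ [y] @ RR"
      unfolding CS_def I nths_mid A_def[symmetric] RR_def k_def using kA unfolding k_def by simp
    have CJ: "CS J S = nths L A @ [y] @ [x] @ RR"
      unfolding CS_def J nths_mid A_def[symmetric] RR_def k_def using kA unfolding k_def by simp
    have UA: "- \<Union>(insert P0 S) = A - {k, Suc k}" unfolding A_def P0_def by auto
    have cL: "nths L (A - {k, Suc k}) = nths L A"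
      by (rule nths_cong) (auto simp: k_def)
    have cR: "{j. Suc (Suc (j + k)) \<in> A - {k, Suc k}} = {j. Suc (Suc (j + k)) \<in> A}" by auto
    have CIi: "CS I (insert P0 S) = nths L A @ RR"
      unfolding CS_def I nths_mid UA RR_def k_def[symmetric] cL cR by simp
    have CJi: "CS J (insert P0 S) = nths L A @ RR"
      unfolding CS_def J nths_mid UA RR_def k_def[symmetric] cL cR by simp
    define s where "s = (of_int ((-1)^ncross S) :: 'a)"
    define D where "D = DS del I S"
    define B where "B = br dd x y"
    define dx where "dx = dd (fst x) (snd x)"
    define dy where "dy = dd (fst y) (snd y)"
    have Bdef: "B = dx * dy + dy * dx" unfolding B_def br_def dx_def dy_def ..
    have cBD: "B * D = D * B" unfolding B_def D_def by (rule br_DS[OF R okx oky])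
    have cBM: "B * M1 = M1 * B" unfolding B_def M1_def by (rule br_dmon[OF R okx oky nths_ok[OF okL]])
    have t1: "tI S = s * D * (M1 * (dx * (dy * M2)))"
      unfolding tI_def CI s_def D_def M1_def M2_def dx_def dy_def by (simp add: dmon_append dmon_Cons)
    have t2: "tJ S = s * D * (M1 * (dy * (dx * M2)))"
      unfolding tJ_def CJ s_def D_def DJ M1_def M2_def dx_def dy_def by (simp add: dmon_append dmon_Cons)
    have t3: "tI (insert P0 S) = - ((1/2) *\<^sub>R (s * (B * D) * (M1 * M2)))"
      unfolding tI_def CIi nc DIi DkI s_def D_def M1_def M2_def B_def by (simp add: dmon_append)
    have t4: "tJ (insert P0 S) = - ((1/2) *\<^sub>R (s * (B * D) * (M1 * M2)))"
      unfolding tJ_def CJi nc DJi DkJ DJ s_def D_def M1_def M2_def B_def by (simp add: dmon_append)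
    have t12: "tI S + tJ S = s * D * (M1 * (B * M2))"
      unfolding t1 t2 Bdef by (simp add: algebra_simps)
    have t34: "tI (insert P0 S) + tJ (insert P0 S) = - (s * (B * D) * (M1 * M2))"
    proof -
      have hz: "(1/2::real) *\<^sub>R Z + (1/2) *\<^sub>R Z = Z" for Z :: 'a by (simp flip: scaleR_add_left)
      show ?thesis unfolding t3 t4 by (metis hz minus_add_distrib)
    qed
    have "s * (B * D) * (M1 * M2) = s * D * (M1 * (B * M2))"
    proof -
      have "s * (B * D) * (M1 * M2) = s * D * ((B * M1) * M2)" by (simp add: cBD mult.assoc)
      also have "\<dots> = s * D * (M1 * (B * M2))" by (simp add: cBM mult.assoc)
      finally show ?thesis .
    qed
    then show ?thesis using t12 t34 by (simp add: algebra_simps)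
  qed
  have Z0: "tJ (sg k S) = - tI S" if SZ: "S \<in> ZS n k" for S
  proof -
    have S: "S \<in> sif n" and P0S: "{k, Suc k} \<notin> S" and cov: "k \<in> \<Union>S \<or> Suc k \<in> \<Union>S"
      using SZ unfolding ZS_def XS_def YS_def by auto
    define h where "h x = (if x \<in> {k, Suc k} then -1 else (1::real))" for x
    have finU: "finite (\<Union>S)"
    proof -
      have "\<Union>S \<subseteq> {0..<n}" using S unfolding sif_def by auto
      then show ?thesis by (rule finite_subset) simp
    qed
    have DJ: "DS del J (sg k S) = of_real (\<Prod>x\<in>\<Union>S. h x) * DS del I S"
    proof (rule DS_transfer[OF DC[OF R] S n_def[symmetric] lJ sw_inj PS_sg[OF S k P0S]])
      fix a b assume ab: "(a,b) \<in> PS n S"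
      then have an: "a < n" "b < n" unfolding PS_def by auto
      have e: "ep J (sw k a) (sw k b) = ep I a b" unfolding ep_def using nthJ an by simp
      show "tk J (sw k a) (sw k b) = tk I a b" unfolding tk_def e using nthJ an by (simp add: ep_def)
      show "ck J (sw k a) (sw k b) = ck I a b * (h a * h b)"
        unfolding ck_def e power_add sign_sw h_def by (simp add: mult_ac)
    qed
    have ph: "(\<Prod>x\<in>\<Union>S. h x) = (-1) ^ card (\<Union>S \<inter> {k, Suc k})"
      unfolding h_def by (rule prod_sign_card[OF finU])
    have key: "(-1::real) ^ ncross (sg k S) * (-1) ^ card (\<Union>S \<inter> {k, Suc k}) = - ((-1) ^ ncross S)"
    proof -
      note nc = ncross_sg[OF S P0S]
      show ?thesis
      proof (cases "k \<in> \<Union>S \<and> Suc k \<in> \<Union>S")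
        case True
        then have "\<Union>S \<inter> {k, Suc k} = {k, Suc k}" by auto
        then show ?thesis using nc True by simp
      next
        case False
        then have "\<Union>S \<inter> {k, Suc k} = {k} \<or> \<Union>S \<inter> {k, Suc k} = {Suc k}" using cov by auto
        then have "card (\<Union>S \<inter> {k, Suc k}) = 1" by auto
        then show ?thesis using nc False by simp
      qed
    qed
    have key': "(of_int ((-1)^ncross (sg k S)) :: 'a) * of_real ((-1) ^ card (\<Union>S \<inter> {k, Suc k})) = - of_int ((-1)^ncross S)"
    proof -
      have "(of_real ((-1::real) ^ ncross (sg k S) * (-1) ^ card (\<Union>S \<inter> {k, Suc k})) :: 'a) = of_real (- ((-1) ^ ncross S))"
        using key by simp
      then show ?thesis by (simp only: of_real_mult of_real_minus ofr_m1)
    qed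
    have CSe: "CS J (sg k S) = CS I S"
    proof -
      define A where "A = - \<Union>S"
      have A': "i \<in> - \<Union>(sg k S) \<longleftrightarrow> sw k i \<in> A" for i
        unfolding A_def Union_sg by (simp add: sw_in_img)
      have cL: "nths L (- \<Union>(sg k S)) = nths L A"
        by (rule nths_cong) (simp only: A', simp add: k_def sw_def)
      have cR: "{j. Suc (Suc (j + k)) \<in> - \<Union>(sg k S)} = {j. Suc (Suc (j + k)) \<in> A}"
        by (simp only: A', simp add: sw_def)
      have m1: "k \<in> - \<Union>(sg k S) \<longleftrightarrow> Suc k \<in> A" "Suc k \<in> - \<Union>(sg k S) \<longleftrightarrow> k \<in> A"
        by (simp_all only: A', simp_all add: sw_def)
      have nb: "\<not> (k \<in> A \<and> Suc k \<in> A)" using cov unfolding A_def by auto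
      have mid: "(if Suc k \<in> A then [y] else []) @ (if k \<in> A then [x] else []) =
                 (if k \<in> A then [x] else []) @ (if Suc k \<in> A then [y] else [])"
        using nb by auto
      show ?thesis
        unfolding CS_def I J nths_mid k_def[symmetric] cL cR m1 A_def[symmetric]
        using mid by simp
    qed
    show ?thesis
      unfolding tJ_def tI_def CSe DJ ph
      using key' by (simp add: mult.assoc flip: mult_minus_left)
        (metis mult.assoc)
  qed
  have "omega del dd I + omega del dd J = 0"
  proof -
    have "sum tJ (ZS n k) = sum (\<lambda>S. tJ (sg k S)) (ZS n k)" by (rule sum_ZS_sg[OF k, symmetric])
    also have "\<dots> = sum (\<lambda>S. - tI S) (ZS n k)" by (rule sum.cong) (auto intro: Z0)
    finally have z: "sum tJ (ZS n k) = - sum tI (ZS n k)" by (simp add: sum_negf)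
    have y: "sum (\<lambda>S. tI (insert P0 S) + tI S) (YS n k) + sum (\<lambda>S. tJ (insert P0 S) + tJ S) (YS n k) = 0"
      unfolding sum.distrib[symmetric] by (rule sum.neutral) (use Y0 in auto)
    show ?thesis unfolding oI oJ sif_split[OF k, of tI] sif_split[OF k, of tJ] P0_def[symmetric]
      using z y by (simp add: algebra_simps)
  qed
  then show ?thesis by (simp add: eq_neg_iff_add_eq_0 add.commute)
qed

end

lemma inv_count_swap:
  assumes p: "Suc p < length xs" and d: "xs ! p \<noteq> xs ! Suc p"
  shows "(-1::int) ^ inv_count (xs[p := xs ! Suc p, Suc p := xs ! p]) = - ((-1) ^ inv_count xs)"
proof -
  define ys where "ys = xs[p := xs ! Suc p, Suc p := xs ! p]"
  define n where "n = length xs"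
  have ly: "length ys = n" unfolding ys_def n_def by simp
  have yn: "ys ! (sw p i) = xs ! i" if "i < n" for i
    using that p unfolding ys_def n_def sw_def by (auto simp: nth_list_update)
  define A where "A = {(a, b). a < b \<and> b < n \<and> xs ! a > xs ! b}"
  define B where "B = {(a, b). a < b \<and> b < n \<and> ys ! a > ys ! b}"
  have iA: "inv_count xs = card A" unfolding inv_count_def A_def n_def ..
  have iB: "inv_count ys = card B" unfolding inv_count_def B_def ly ..
  define z where "z = (p, Suc p)"
  define f where "f = map_prod (sw p) (sw p)"
  have finA: "finite A" unfolding A_def by (rule finite_subset[of _ "{0..<n} \<times> {0..<n}"]) auto
  have finB: "finite B" unfolding B_def by (rule finite_subset[of _ "{0..<n} \<times> {0..<n}"]) auto
  have injf: "inj f" unfolding f_def by (rule injI) (auto simp: prod_eq_iff)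
  have BA: "B - {z} = f ` (A - {z})"
  proof (rule set_eqI)
    fix q :: "nat \<times> nat"
    obtain a b where q: "q = (a,b)" by fastforce
    have "q \<in> f ` (A - {z}) \<longleftrightarrow> (sw p a, sw p b) \<in> A - {z}"
    proof
      assume "q \<in> f ` (A - {z})"
      then obtain c e where "(c,e) \<in> A - {z}" "q = (sw p c, sw p e)" unfolding f_def by auto
      then show "(sw p a, sw p b) \<in> A - {z}" using q by auto
    next
      assume "(sw p a, sw p b) \<in> A - {z}"
      then have "f (sw p a, sw p b) \<in> f ` (A - {z})" by (rule imageI)
      then show "q \<in> f ` (A - {z})" unfolding f_def q by simp
    qed
    moreover have "q \<in> B - {z} \<longleftrightarrow> (sw p a, sw p b) \<in> A - {z}"
    proof -
      have "(a < b \<and> b < n \<and> ys ! a > ys ! b \<and> (a,b) \<noteq> (p, Suc p)) \<longleftrightarrow>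
            (sw p a < sw p b \<and> sw p b < n \<and> xs ! sw p a > xs ! sw p b \<and> (sw p a, sw p b) \<noteq> (p, Suc p))"
      proof
        assume h: "a < b \<and> b < n \<and> ys ! a > ys ! b \<and> (a,b) \<noteq> (p, Suc p)"
        have l: "sw p a < sw p b" using h by (intro sw_less) auto
        have "sw p b < n" using h p sw_lt unfolding n_def by auto
        moreover have "ys ! a = xs ! sw p a" using yn[of "sw p a"] l \<open>sw p b < n\<close> by simp
        moreover have "ys ! b = xs ! sw p b" using yn[of "sw p b"] \<open>sw p b < n\<close> by simp
        moreover have "(sw p a, sw p b) \<noteq> (p, Suc p)" using h by (auto simp: sw_def)
        ultimately show "sw p a < sw p b \<and> sw p b < n \<and> xs ! sw p a > xs ! sw p b \<and> (sw p a, sw p b) \<noteq> (p, Suc p)"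
          using h l by simp
      next
        assume h: "sw p a < sw p b \<and> sw p b < n \<and> xs ! sw p a > xs ! sw p b \<and> (sw p a, sw p b) \<noteq> (p, Suc p)"
        have "sw p (sw p a) < sw p (sw p b)" using h by (intro sw_less) (auto simp: sw_def split: if_splits)
        then have l: "a < b" by simp
        have bn: "b < n" using h p sw_lt[of "sw p b" n p] unfolding n_def by auto
        have "ys ! a = xs ! sw p a" "ys ! b = xs ! sw p b"
          using yn[of "sw p a"] yn[of "sw p b"] h l bn by (auto intro: less_trans)
        moreover have "(a, b) \<noteq> (p, Suc p)" using h by (auto simp: sw_def)
        ultimately show "a < b \<and> b < n \<and> ys ! a > ys ! b \<and> (a,b) \<noteq> (p, Suc p)"
          using h l bn by simp
      qed
      then show ?thesis unfolding q B_def A_def z_def by simp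
    qed
    ultimately show "q \<in> B - {z} \<longleftrightarrow> q \<in> f ` (A - {z})" by simp
  qed
  have cBA: "card (B - {z}) = card (A - {z})"
    unfolding BA by (rule card_image) (rule inj_on_subset[OF injf], simp)
  have zz: "z \<in> B \<longleftrightarrow> z \<notin> A"
  proof -
    have "ys ! p = xs ! Suc p" "ys ! Suc p = xs ! p" using p unfolding ys_def by (auto simp: nth_list_update)
    then show ?thesis unfolding z_def A_def B_def n_def using p d by auto
  qed
  have cA: "card A = card (A - {z}) + (if z \<in> A then 1 else 0)"
    using finA by (simp add: card_Diff_singleton_if card_gt_0_iff) (metis Suc_pred card_gt_0_iff empty_iff)
  have cB: "card B = card (B - {z}) + (if z \<in> B then 1 else 0)"
    using finB by (simp add: card_Diff_singleton_if card_gt_0_iff) (metis Suc_pred card_gt_0_iff empty_iff)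
  have "card B + card A = 2 * card (A - {z}) + 1" using cA cB cBA zz by auto
  then have "odd (card B + card A)" by simp
  then have "(-1::int) ^ card B = - ((-1) ^ card A)"
    by (cases "even (card A)") (auto simp: minus_one_power_iff)
  then show ?thesis unfolding ys_def[symmetric] iA iB .
qed

lemma tt_set: "{i,j,c,e} = {i',j',c',e'} \<Longrightarrow> tt i j c e = tt i' j' c' e'"
  unfolding tt_def by simp

lemma eps_swap12: "eps j i c e = - eps i j c e"
proof -
  have s: "{j,i,c,e} = {i,j,c,e}" by auto
  have t: "tt j i c e = tt i j c e" by (rule tt_set[OF s])
  show ?thesis
  proof (cases "{i,j,c,e} \<subseteq> {1..5} \<and> card {i,j,c,e} = 4")
    case False then show ?thesis unfolding eps_def s by (simp only: if_not_P[OF False]) simp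
  next
    case True
    have ij: "i \<noteq> j"
    proof
      assume "i = j"
      then have "{i,j,c,e} = set [i,c,e]" by auto
      then have "card {i,j,c,e} \<le> 3" using card_length[of "[i,c,e]"] by simp
      then show False using True by simp
    qed
    have "[j,i,c,e,tt i j c e] = [i,j,c,e,tt i j c e][0 := [i,j,c,e,tt i j c e] ! Suc 0, Suc 0 := [i,j,c,e,tt i j c e] ! 0]"
      by simp
    then have "perm_sign [j,i,c,e,tt i j c e] = - perm_sign [i,j,c,e,tt i j c e]"
      unfolding perm_sign_def using inv_count_swap[of 0 "[i,j,c,e,tt i j c e]"] ij by simp
    then show ?thesis unfolding eps_def s t by (simp only: if_P[OF True])
  qed
qed

lemma eps_swap34: "eps a b e c = - eps a b c e"
proof -
  have s: "{a,b,e,c} = {a,b,c,e}" by auto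
  have t: "tt a b e c = tt a b c e" by (rule tt_set[OF s])
  show ?thesis
  proof (cases "{a,b,c,e} \<subseteq> {1..5} \<and> card {a,b,c,e} = 4")
    case False then show ?thesis unfolding eps_def s by (simp only: if_not_P[OF False]) simp
  next
    case True
    have ce: "c \<noteq> e"
    proof
      assume "c = e"
      then have "{a,b,c,e} = set [a,b,c]" by auto
      then have "card {a,b,c,e} \<le> 3" using card_length[of "[a,b,c]"] by simp
      then show False using True by simp
    qed
    have "[a,b,e,c,tt a b c e] = [a,b,c,e,tt a b c e][2 := [a,b,c,e,tt a b c e] ! 3, 3 := [a,b,c,e,tt a b c e] ! 2]"
      by (simp add: numeral_eq_Suc)
    then have "perm_sign [a,b,e,c,tt a b c e] = - perm_sign [a,b,c,e,tt a b c e]"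
      unfolding perm_sign_def using inv_count_swap[of 2 "[a,b,c,e,tt a b c e]"] ce by (simp add: numeral_eq_Suc)
    then show ?thesis unfolding eps_def s t by (simp only: if_P[OF True])
  qed
qed

lemma nths_mid1: "nths (L @ [u] @ R) A = nths L A @ (if length L \<in> A then [u] else []) @ nths R {j. Suc (j + length L) \<in> A}"
  by (simp add: nths_append nths_Cons)

lemma nth_mid1: "i \<noteq> length L \<Longrightarrow> (L @ [u] @ R) ! i = (L @ [u'] @ R) ! i"
  by (cases "i < length L") (auto simp: nth_append nth_Cons split: nat.split)

lemma neg_self: "(x::'a::real_vector) = - x \<Longrightarrow> x = 0"
proof -
  assume "x = - x"
  then have "x + x = 0" by (metis add.right_inverse)
  then have "(2::real) *\<^sub>R x = 0" by (simp add: scaleR_2)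
  then show "x = 0" by simp
qed

lemma split2: "Suc p < length I \<Longrightarrow> I = take p I @ [I!p, I!Suc p] @ drop (Suc (Suc p)) I"
proof -
  assume a: "Suc p < length I"
  have "drop p I = I!p # drop (Suc p) I" using a by (simp add: Cons_nth_drop_Suc)
  also have "drop (Suc p) I = I!Suc p # drop (Suc (Suc p)) I" using a by (simp add: Cons_nth_drop_Suc)
  finally have "drop p I = [I!p, I!Suc p] @ drop (Suc (Suc p)) I" by simp
  then show ?thesis by (metis append_take_drop_id)
qed

lemma split1: "p < length I \<Longrightarrow> I = take p I @ [I!p] @ drop (Suc p) I"
  by (simp add: id_take_nth_drop)

lemma ok_swap: "ok (prod.swap z) = ok z" unfolding ok_def by auto

context
  fixes del :: "nat \<Rightarrow> 'a::real_algebra_1" and dd :: "nat \<Rightarrow> nat \<Rightarrow> 'a"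
  assumes R: "Uminus_rels del dd"
begin

lemma omega_swap_entry:
  assumes I: "I = L @ [z] @ Rt" and I': "I' = L @ [prod.swap z] @ Rt" and V: "valid_idx I"
  shows "omega del dd I' = - omega del dd I"
proof -
  define n where "n = length I"
  define k where "k = length L"
  have lI': "length I' = n" unfolding n_def I I' by simp
  have okz: "ok z" using V unfolding valid_ok I by auto
  have nI: "I' ! i = I ! i" if "i \<noteq> k" for i
    unfolding I I' using nth_mid1 that k_def by metis
  have nk: "I ! k = z" "I' ! k = prod.swap z" unfolding I I' k_def by (simp_all add: nth_append)
  define h where "h x = (if x \<in> {k} then -1 else (1::real))" for x
  have tm: "(of_int ((-1)^ncross S) :: 'a) * DS del I' S * dmon dd (CS I' S) =
     - (of_int ((-1)^ncross S) * DS del I S * dmon dd (CS I S))" if S: "S \<in> sif n" for S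
  proof -
    have finU: "finite (\<Union>S)"
    proof -
      have "\<Union>S \<subseteq> {0..<n}" using S unfolding sif_def by auto
      then show ?thesis by (rule finite_subset) simp
    qed
    have DJ: "DS del I' S = of_real (\<Prod>x\<in>\<Union>S. h x) * DS del I S"
    proof (rule DS_transfer[OF DC[OF R] S n_def[symmetric] lI', where f=id])
      show "inj (id::nat\<Rightarrow>nat)" by simp
      show "PS n S = map_prod id id ` PS n S" by (simp add: map_prod.id)
    next
      fix a b assume ab: "(a,b) \<in> PS n S"
      then have ab': "a < b" unfolding PS_def by auto
      have e: "ep I' a b = ep I a b * (if a = k \<or> b = k then -1 else 1)"
      proof (cases "a = k")
        case True
        then have "b \<noteq> k" using ab' by simp
        then show ?thesis unfolding ep_def using True nk nI[of b] \<open>b \<noteq> k\<close> eps_swap12[of "snd z" "fst z" "fst (I!b)" "snd (I!b)"] by simp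
      next
        case False
        note aF = False
        show ?thesis
        proof (cases "b = k")
          case True
          then show ?thesis unfolding ep_def using True aF nk nI[of a] eps_swap34[of "fst (I!a)" "snd (I!a)" "snd z" "fst z"] by simp
        next
          case False
          then show ?thesis unfolding ep_def using aF nI[of a] nI[of b] by simp
        qed
      qed
      have t: "tt (fst (I'!a)) (snd (I'!a)) (fst (I'!b)) (snd (I'!b)) = tt (fst (I!a)) (snd (I!a)) (fst (I!b)) (snd (I!b))"
      proof (cases "a = k")
        case True
        then have "b \<noteq> k" using ab' by simp
        then show ?thesis using True nk nI[of b] by (intro tt_set) auto
      next
        case False
        note aF = False
        show ?thesis
        proof (cases "b = k")
          case True
          then show ?thesis using aF nk nI[of a] by (intro tt_set) auto
        next
          case False
          then show ?thesis using aF nI[of a] nI[of b] by simp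
        qed
      qed
      show "tk I' (id a) (id b) = tk I a b" unfolding tk_def id_def t e by simp
      show "ck I' (id a) (id b) = ck I a b * (h a * h b)"
        unfolding ck_def id_def e h_def using ab' by auto
    qed
    have ph: "(\<Prod>x\<in>\<Union>S. h x) = (-1) ^ card (\<Union>S \<inter> {k})"
      unfolding h_def by (rule prod_sign_card[OF finU])
    define A where "A = - \<Union>S"
    define P1 where "P1 = nths L A"
    define P2 where "P2 = nths Rt {j. Suc (j + k) \<in> A}"
    have CI: "CS I S = P1 @ (if k \<in> A then [z] else []) @ P2"
      unfolding CS_def I nths_mid1 A_def[symmetric] P1_def P2_def k_def ..
    have CI': "CS I' S = P1 @ (if k \<in> A then [prod.swap z] else []) @ P2"
      unfolding CS_def I' nths_mid1 A_def[symmetric] P1_def P2_def k_def ..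
    show ?thesis
    proof (cases "k \<in> \<Union>S")
      case True
      then have "\<Union>S \<inter> {k} = {k}" by auto
      have kA: "k \<notin> A" using True unfolding A_def by simp
      have "DS del I' S = - DS del I S" using DJ ph \<open>\<Union>S \<inter> {k} = {k}\<close> by simp
      moreover have "CS I' S = CS I S" using CI CI' kA by simp
      ultimately show ?thesis by simp
    next
      case False
      then have "\<Union>S \<inter> {k} = {}" by auto
      then have "DS del I' S = DS del I S" using DJ ph by simp
      moreover have "dmon dd (CS I' S) = - dmon dd (CS I S)"
        using CI CI' False ANTI[OF R okz] unfolding A_def
        by (simp add: dmon_append dmon_Cons dmon_Nil)
      ultimately show ?thesis by simp
    qed
  qed
  have "omega del dd I' = (\<Sum>S\<in>sif n. - (of_int ((-1)^ncross S) * DS del I S * dmon dd (CS I S)))"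
    unfolding omega_def lI' by (rule sum.cong[OF refl]) (rule tm)
  also have "\<dots> = - omega del dd I" unfolding omega_def n_def by (simp add: sum_negf)
  finally show ?thesis .
qed

lemma eq0:
  assumes "valid_idx I" "j < k" "k < length I" "I ! j = I ! k"
  shows "omega del dd I = 0"
  using assms
proof (induct k arbitrary: I)
  case 0 then show ?case by simp
next
  case (Suc k')
  show ?case
  proof (cases "k' = j")
    case True
    have e: "I ! Suc j = I ! j" using Suc.prems(4) True by simp
    have h: "I = take j I @ [I!j, I!Suc j] @ drop (Suc (Suc j)) I"
      by (rule split2) (use Suc.prems True in simp)
    have "omega del dd I = - omega del dd I"
      by (rule omega_adj[OF R h[unfolded e] h[unfolded e] Suc.prems(1)])
    then show ?thesis by (rule neg_self)
  next
    case False
    then have jk: "j < k'" using Suc.prems by simp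
    define I2 where "I2 = take k' I @ [I!Suc k', I!k'] @ drop (Suc (Suc k')) I"
    have sI: "I = take k' I @ [I!k', I!Suc k'] @ drop (Suc (Suc k')) I"
      by (rule split2) (use Suc.prems in simp)
    have o2: "omega del dd I2 = - omega del dd I"
      by (rule omega_adj[OF R sI I2_def Suc.prems(1)])
    have lk: "length (take k' I) = k'" using Suc.prems by simp
    have V2: "valid_idx I2"
    proof -
      have "set I2 \<subseteq> set I" unfolding I2_def using Suc.prems
        by (auto dest: in_set_takeD in_set_dropD)
      then show ?thesis using Suc.prems(1) unfolding valid_idx_def by blast
    qed
    have "I2 ! j = I ! j" unfolding I2_def using jk lk by (simp add: nth_append)
    moreover have "I2 ! k' = I ! Suc k'" unfolding I2_def using lk by (simp add: nth_append)
    moreover have "length I2 = length I" unfolding I2_def using Suc.prems by simp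
    ultimately have "omega del dd I2 = 0"
      using Suc.hyps[OF V2 jk] Suc.prems by simp
    then show ?thesis using o2 by simp
  qed
qed

end

theorem corollary5p7:
  fixes del :: "nat \<Rightarrow> 'a::real_algebra_1" and dd :: "nat \<Rightarrow> nat \<Rightarrow> 'a" and I :: idx
  assumes "Uminus_rels del dd" and "valid_idx I"
  shows "((\<exists>j k. j < k \<and> k < length I \<and> I ! j = I ! k) \<longrightarrow> omega del dd I = 0) \<and>
         ((\<exists>j k. j \<le> k \<and> k < length I \<and> I ! j = prod.swap (I ! k)) \<longrightarrow> omega del dd I = 0)"
proof (intro conjI impI)
  assume "\<exists>j k. j < k \<and> k < length I \<and> I ! j = I ! k"
  then obtain j k where "j < k" "k < length I" "I ! j = I ! k" by blast
  then show "omega del dd I = 0" using eq0[OF assms(1) assms(2)] by blast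
next
  assume "\<exists>j k. j \<le> k \<and> k < length I \<and> I ! j = prod.swap (I ! k)"
  then obtain j k where jk: "j \<le> k" "k < length I" "I ! j = prod.swap (I ! k)" by blast
  define I' where "I' = take k I @ [prod.swap (I!k)] @ drop (Suc k) I"
  have sI: "I = take k I @ [I!k] @ drop (Suc k) I" by (rule split1) (rule jk(2))
  have o: "omega del dd I' = - omega del dd I"
    by (rule omega_swap_entry[OF assms(1) sI I'_def assms(2)])
  have lk: "length (take k I) = k" using jk by simp
  show "omega del dd I = 0"
  proof (cases "j = k")
    case True
    then have "I' = I" using jk unfolding I'_def by (metis sI)
    then show ?thesis using o by (metis neg_self)
  next
    case False
    then have jk': "j < k" using jk by simp
    have V': "valid_idx I'"
    proof -
      have "ok (I ! k)" using assms(2) jk unfolding valid_ok by auto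
      then have "ok (prod.swap (I ! k))" by (simp add: ok_swap)
      moreover have "\<forall>p\<in>set (take k I) \<union> set (drop (Suc k) I). ok p"
        using assms(2) unfolding valid_ok by (auto dest: in_set_takeD in_set_dropD)
      ultimately show ?thesis unfolding valid_ok I'_def by auto
    qed
    have "I' ! j = I ! j" unfolding I'_def using jk' lk by (simp add: nth_append)
    moreover have "I' ! k = prod.swap (I ! k)" unfolding I'_def using lk by (simp add: nth_append)
    moreover have "length I' = length I" unfolding I'_def using jk by simp
    ultimately have "omega del dd I' = 0"
      using eq0[OF assms(1) V' jk'] jk by simp
    then show ?thesis using o by simp
  qed
qed


end
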